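(* Let $\alpha,\beta,\gamma,x\in\mathbb{N}_0$ with $(\alpha,\beta,\gamma,x)\neq(0,0,0,0)$, let $\lambda$ be a nonnegative integer and $n$ a nonnegative integer. Then $$A^{\lambda,x}_{n+1}(\alpha,\beta,\gamma)=\gamma\, A^{\lambda,x}_n(\alpha,\beta,\gamma+\alpha)+x\lambda\beta\, A^{\lambda+1,x}_n(\alpha,\beta,\gamma+\beta+\alpha).$$
   Context: For a number $t$ and $\alpha$, the generalised factorial is $(t|\alpha)_n=\prod_{j=0}^{n-1}(t-j\alpha)$ for $n\ge 1$ and $(t|\alpha)_0=1$. For parameters $\alpha,\beta,\gamma$, the generalised Stirling numbers $S(n,k,\alpha,\beta,\gamma)$ ($0\le k\le n$) are defined by the polynomial identity $(t|\alpha)_n=\sum_{k=0}^{n}S(n,k,\alpha,\beta,\gamma)\,(t-\gamma|\beta)_k$ in the variable $t$. For a nonnegative integer $\lambda$ put $\binom{k+\lambda-1}{k}=\lambda(\lambda+1)\cdots(\lambda+k-1)/k!$ (equal to $1$ for $k=0$). Define $$A^{\lambda,x}_n(\alpha,\beta,\gamma)=\sum_{k=0}^{n}\binom{k+\lambda-1}{k}(-1)^{n+k}\beta^k k!\,S(n,k,\alpha,-\beta,-\gamma)\,x^k .$$ *)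

theory Defs
  imports Complex_Main
begin

definition gfact :: "real \<Rightarrow> real \<Rightarrow> nat \<Rightarrow> real" where
  "gfact t a n = (\<Prod>j<n. (t - of_nat j * a))"

definition gstirling :: "nat \<Rightarrow> nat \<Rightarrow> real \<Rightarrow> real \<Rightarrow> real \<Rightarrow> real" where
  "gstirling n k a b g =
     (THE c :: nat \<Rightarrow> real. (\<forall>i>n. c i = 0) \<and>
        (\<forall>t::real. gfact t a n = (\<Sum>i\<le>n. c i * gfact (t - g) b i))) k"

text \<open>binom(k+lambda-1, k) = lambda(lambda+1)...(lambda+k-1)/k!\<close>
definition lbinom :: "nat \<Rightarrow> nat \<Rightarrow> real" where
  "lbinom lam k = pochhammer (real lam) k / fact k"

definition Apoly :: "nat \<Rightarrow> real \<Rightarrow> nat \<Rightarrow> real \<Rightarrow> real \<Rightarrow> real \<Rightarrow> real" where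
  "Apoly lam x n a b g =
     (\<Sum>k\<le>n. lbinom lam k * (-1) ^ (n + k) * b ^ k * fact k * gstirling n k a (- b) (- g) * x ^ k)"

end

theory Submission
  imports Defs "HOL-Computational_Algebra.Polynomial"
begin

fun Qp :: "real \<Rightarrow> real \<Rightarrow> nat \<Rightarrow> real poly" where
  "Qp g b 0 = 1"
| "Qp g b (Suc i) = Qp g b i * [:-(g + of_nat i * b), 1:]"

lemma poly_Qp: "poly (Qp g b i) t = gfact (t-g) b i"
  by (induction i) (simp_all add: gfact_def algebra_simps)

lemma Qp_deg: "degree (Qp g b i) = i \<and> coeff (Qp g b i) i = 1"
proof (induction i)
  case 0 then show ?case by simp
next
  case (Suc i)
  have nz: "Qp g b i \<noteq> 0" using Suc by auto
  have d: "degree (Qp g b (Suc i)) = Suc i"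
  proof -
    have "degree (Qp g b i * [:-(g + of_nat i * b), 1:]) = degree (Qp g b i) + degree [:-(g + of_nat i * b), 1:]"
      by (rule degree_mult_eq) (use nz in auto)
    then show ?thesis using Suc by simp
  qed
  have "lead_coeff (Qp g b (Suc i)) = 1"
    by (simp only: Qp.simps lead_coeff_mult) (use Suc in simp)
  with d show ?case by simp
qed

lemma uniq: "(\<forall>t. (\<Sum>i\<le>n. d i * gfact (t-g) b i) = 0) \<Longrightarrow> (\<forall>i\<le>n. d i = 0)"
proof (induction n)
  case 0
  then show ?case by (simp add: gfact_def)
next
  case (Suc n)
  define p where "p = (\<Sum>i\<le>Suc n. smult (d i) (Qp g b i))"
  have "\<forall>t. poly p t = 0" using Suc.prems unfolding p_def poly_sum poly_Qp poly_smult by simp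
  then have p0: "p = 0" using poly_all_0_iff_0 by blast
  have "coeff p (Suc n) = (\<Sum>i\<le>Suc n. d i * coeff (Qp g b i) (Suc n))"
    by (simp add: p_def coeff_sum)
  also have "\<dots> = d (Suc n)"
  proof -
    have "\<forall>i\<le>n. coeff (Qp g b i) (Suc n) = 0"
      using Qp_deg by (auto intro!: coeff_eq_0)
    then show ?thesis using Qp_deg[of g b "Suc n"] by simp
  qed
  finally have ds: "d (Suc n) = 0" using p0 by simp
  then have "\<forall>t. (\<Sum>i\<le>n. d i * gfact (t-g) b i) = 0" using Suc.prems by simp
  then have "\<forall>i\<le>n. d i = 0" by (rule Suc.IH)
  with ds show ?case using le_Suc_eq by auto
qed

definition expands where
  "expands n a b g c \<longleftrightarrow> (\<forall>i>n. c i = 0) \<and> (\<forall>t::real. gfact t a n = (\<Sum>i\<le>n. c i * gfact (t - g) b i))"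

lemma expands_unique: assumes "expands n a b g c" "expands n a b g c'" shows "c = c'"
proof
  fix k
  have "\<forall>t. (\<Sum>i\<le>n. (c i - c' i) * gfact (t-g) b i) = 0"
    using assms by (simp add: expands_def algebra_simps sum_subtractf)
  then have "\<forall>i\<le>n. c i - c' i = 0" by (rule uniq)
  then show "c k = c' k" using assms unfolding expands_def
    by (cases "k \<le> n") auto
qed

lemma gstirling_eq: assumes "expands n a b g c" shows "gstirling n k a b g = c k"
proof -
  have "(THE c. expands n a b g c) = c"
    using assms expands_unique by blast
  then show ?thesis unfolding gstirling_def expands_def[symmetric] by simp
qed


lemma gfact_Suc: "gfact t a (Suc n) = gfact t a n * (t - of_nat n * a)"
  by (simp add: gfact_def)

lemma gfact_Suc_shift: "gfact t a (Suc n) = t * gfact (t - a) a n"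
  unfolding gfact_def prod.lessThan_Suc_shift by (simp add: algebra_simps)

lemma gfact_basis: "gfact y b (Suc k) = gfact (y - b) b (Suc k) + of_nat (Suc k) * b * gfact (y - b) b k"
proof -
  have "gfact y b (Suc k) = y * gfact (y - b) b k" by (rule gfact_Suc_shift)
  moreover have "gfact (y - b) b (Suc k) = gfact (y - b) b k * (y - b - of_nat k * b)" by (rule gfact_Suc)
  ultimately show ?thesis by (simp add: algebra_simps)
qed

lemma mult_lin:
  assumes c0: "c (Suc n) = 0"
    and f: "f t = (\<Sum>i\<le>n. c i * gfact (t - g) b i)"
  shows "(t - u) * f t = (\<Sum>i\<le>Suc n. ((if i = 0 then 0 else c (i - 1)) + (g + of_nat i * b - u) * c i) * gfact (t - g) b i)"
proof -
  have Q: "(t - u) * gfact (t - g) b i = gfact (t - g) b (Suc i) + (g + of_nat i * b - u) * gfact (t - g) b i" for i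
    by (simp add: gfact_Suc algebra_simps)
  have "(\<Sum>i\<le>Suc n. ((if i = 0 then 0 else c (i - 1)) + (g + of_nat i * b - u) * c i) * gfact (t - g) b i)
      = (\<Sum>i\<le>Suc n. (if i = 0 then 0 else c (i - 1)) * gfact (t - g) b i) + (\<Sum>i\<le>Suc n. (g + of_nat i * b - u) * c i * gfact (t - g) b i)"
    unfolding sum.distrib[symmetric] by (rule sum.cong) (simp_all add: algebra_simps)
  also have "(\<Sum>i\<le>Suc n. (if i = 0 then 0 else c (i - 1)) * gfact (t - g) b i) = (\<Sum>i\<le>n. c i * gfact (t - g) b (Suc i))"
    by (subst sum.atMost_Suc_shift) simp
  also have "(\<Sum>i\<le>Suc n. (g + of_nat i * b - u) * c i * gfact (t - g) b i) = (\<Sum>i\<le>n. (g + of_nat i * b - u) * c i * gfact (t - g) b i)"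
    using c0 by simp
  also have "(\<Sum>i\<le>n. c i * gfact (t - g) b (Suc i)) + (\<Sum>i\<le>n. (g + of_nat i * b - u) * c i * gfact (t - g) b i)
      = (\<Sum>i\<le>n. c i * ((t - u) * gfact (t - g) b i))"
    unfolding sum.distrib[symmetric] by (rule sum.cong) (simp_all only: Q, simp add: algebra_simps)
  also have "\<dots> = (t - u) * f t" by (simp add: f sum_distrib_left algebra_simps)
  finally show ?thesis by simp
qed

lemma expands_exists: "\<exists>c. expands n a b g c"
proof (induction n)
  case 0
  show ?case by (rule exI[of _ "\<lambda>i. if i = 0 then 1 else 0"]) (simp add: expands_def gfact_def)
next
  case (Suc n)
  then obtain c where c: "expands n a b g c" by blast
  show ?case
  proof (rule exI[of _ "\<lambda>i. (if i = 0 then 0 else c (i - 1)) + (g + of_nat i * b - of_nat n * a) * c i"], unfold expands_def, intro conjI allI impI)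
    fix i assume "Suc n < i" then show "(if i = 0 then 0 else c (i - 1)) + (g + of_nat i * b - of_nat n * a) * c i = 0"
      using c by (simp add: expands_def)
  next
    fix t
    have "gfact t a (Suc n) = (t - of_nat n * a) * gfact t a n" by (simp add: gfact_Suc)
    also have "\<dots> = (\<Sum>i\<le>Suc n. ((if i = 0 then 0 else c (i - 1)) + (g + of_nat i * b - of_nat n * a) * c i) * gfact (t - g) b i)"
      by (rule mult_lin) (use c in \<open>auto simp: expands_def\<close>)
    finally show "gfact t a (Suc n) = (\<Sum>i\<le>Suc n. ((if i = 0 then 0 else c (i - 1)) + (g + of_nat i * b - of_nat n * a) * c i) * gfact (t - g) b i)" .
  qed
qed

lemma basis_change:
  assumes c0: "c (Suc n) = 0"
    and f: "f = (\<Sum>i\<le>n. c i * gfact y b i)"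
  shows "f = (\<Sum>i\<le>n. (c i + of_nat (Suc i) * b * c (Suc i)) * gfact (y - b) b i)"
proof -
  have "f = (\<Sum>i\<le>Suc n. c i * gfact y b i)" using f c0 by simp
  also have "\<dots> = c 0 + (\<Sum>i\<le>n. c (Suc i) * gfact y b (Suc i))"
    by (subst sum.atMost_Suc_shift) (simp add: gfact_def)
  also have "\<dots> = c 0 + (\<Sum>i\<le>n. c (Suc i) * gfact (y - b) b (Suc i)) + (\<Sum>i\<le>n. of_nat (Suc i) * b * c (Suc i) * gfact (y - b) b i)"
  proof -
    have "c (Suc i) * gfact y b (Suc i) = c (Suc i) * gfact (y - b) b (Suc i) + of_nat (Suc i) * b * c (Suc i) * gfact (y - b) b i" for i
      by (simp only: gfact_basis[of y b i]) (simp add: algebra_simps)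
    then show ?thesis by (simp add: sum.distrib)
  qed
  also have "c 0 + (\<Sum>i\<le>n. c (Suc i) * gfact (y - b) b (Suc i)) = (\<Sum>i\<le>Suc n. c i * gfact (y - b) b i)"
    by (subst sum.atMost_Suc_shift) (simp add: gfact_def)
  also have "\<dots> = (\<Sum>i\<le>n. c i * gfact (y - b) b i)" using c0 by simp
  finally show ?thesis by (simp add: sum.distrib algebra_simps)
qed


lemma lb_fact: "lbinom lam k * fact k = pochhammer (real lam) k"
  by (simp add: lbinom_def)

lemma final:
  fixes c :: "nat \<Rightarrow> real" and ga be x :: real
  assumes c0: "c (Suc n) = 0"
  shows "(\<Sum>k\<le>Suc n. lbinom lam k * (-1)^(Suc n + k) * be^k * fact k * ((if k=0 then 0 else c (k-1)) + (- ga + real k * (- be) - 0) * c k) * x^k)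
   = ga * (\<Sum>k\<le>n. lbinom lam k * (-1)^(n+k) * be^k * fact k * c k * x^k)
     + x * real lam * be * (\<Sum>k\<le>n. lbinom (lam+1) k * (-1)^(n+k) * be^k * fact k * (c k + real (Suc k) * (- be) * c (Suc k)) * x^k)"
proof -
  define A where "A k = pochhammer (real lam) k" for k
  define B where "B k = pochhammer (real lam + 1) k" for k
  have AB: "A (Suc k) = real lam * B k" for k by (simp add: A_def B_def pochhammer_rec)
  have lA: "lbinom lam k * fact k = A k" for k by (simp add: A_def lbinom_def)
  have lB: "lbinom (lam+1) k * fact k = B k" for k by (simp add: B_def lbinom_def add.commute)
  define U where "U k = A k * (-1)^(Suc n + k) * be^k * (if k=0 then 0 else c (k-1)) * x^k" for k
  define V where "V k = A k * (-1)^(Suc n + k) * be^k * ((- ga + real k * (- be)) * c k) * x^k" for k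
  define G where "G k = A k * (-1)^(n+k) * be^k * c k * x^k" for k
  define W1 where "W1 k = B k * (-1)^(n+k) * be^k * c k * x^k" for k
  define W2 where "W2 k = B k * (-1)^(n+k) * be^k * (real (Suc k) * (- be) * c (Suc k)) * x^k" for k
  define W2' where "W2' k = (if k = 0 then 0 else W2 (k - 1))" for k
  have L: "(\<Sum>k\<le>Suc n. lbinom lam k * (-1)^(Suc n + k) * be^k * fact k * ((if k=0 then 0 else c (k-1)) + (- ga + real k * (- be) - 0) * c k) * x^k)
      = (\<Sum>k\<le>Suc n. U k) + (\<Sum>k\<le>Suc n. V k)"
    unfolding sum.distrib[symmetric]
  proof (rule sum.cong)
    fix k
    have "lbinom lam k * (-1)^(Suc n + k) * be^k * fact k = A k * (-1)^(Suc n + k) * be^k"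
      using lA[of k] by (simp add: algebra_simps)
    then show "lbinom lam k * (-1)^(Suc n + k) * be^k * fact k * ((if k=0 then 0 else c (k-1)) + (- ga + real k * (- be) - 0) * c k) * x^k = U k + V k"
      unfolding U_def V_def lA[symmetric] by (simp add: algebra_simps)
  qed simp
  have U: "(\<Sum>k\<le>Suc n. U k) = (\<Sum>k\<le>n. U (Suc k))"
    by (subst sum.atMost_Suc_shift) (simp add: U_def)
  have V: "(\<Sum>k\<le>Suc n. V k) = (\<Sum>k\<le>n. V k)"
    using c0 by (simp add: V_def)
  have R1: "(\<Sum>k\<le>n. lbinom lam k * (-1)^(n+k) * be^k * fact k * c k * x^k) = (\<Sum>k\<le>n. G k)"
  proof (rule sum.cong)
    fix k
    have "lbinom lam k * (-1)^(n + k) * be^k * fact k = A k * (-1)^(n + k) * be^k"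
      using lA[of k] by (simp add: algebra_simps)
    then show "lbinom lam k * (-1)^(n+k) * be^k * fact k * c k * x^k = G k"
      unfolding G_def lA[symmetric] by (simp add: algebra_simps)
  qed simp
  have R2: "(\<Sum>k\<le>n. lbinom (lam+1) k * (-1)^(n+k) * be^k * fact k * (c k + real (Suc k) * (- be) * c (Suc k)) * x^k)
      = (\<Sum>k\<le>n. W1 k) + (\<Sum>k\<le>n. W2 k)"
    unfolding sum.distrib[symmetric]
  proof (rule sum.cong)
    fix k
    have "lbinom (lam+1) k * (-1)^(n + k) * be^k * fact k = B k * (-1)^(n + k) * be^k"
      using lB[of k] by (simp add: algebra_simps)
    then show "lbinom (lam+1) k * (-1)^(n+k) * be^k * fact k * (c k + real (Suc k) * (- be) * c (Suc k)) * x^k = W1 k + W2 k"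
      unfolding W1_def W2_def lB[symmetric] by (simp add: algebra_simps)
  qed simp
  have W2: "(\<Sum>k\<le>n. W2 k) = (\<Sum>k\<le>n. W2' k)"
  proof -
    have "(\<Sum>k\<le>Suc n. W2' k) = (\<Sum>k\<le>n. W2 k)"
      by (subst sum.atMost_Suc_shift) (simp add: W2'_def)
    moreover have "(\<Sum>k\<le>Suc n. W2' k) = (\<Sum>k\<le>n. W2' k)"
      using c0 by (simp add: W2'_def W2_def)
    ultimately show ?thesis by simp
  qed
  have T: "U (Suc k) + V k = ga * G k + x * real lam * be * (W1 k + W2' k)" for k
  proof (cases k)
    case 0
    then show ?thesis
      by (simp add: U_def V_def G_def W1_def W2'_def AB algebra_simps)
  next
    case (Suc j)
    have s1: "(-1::real)^(n + Suc j) = - ((-1)^(n+j))" by simp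
    have s2: "(-1::real)^(Suc n + Suc (Suc j)) = - ((-1)^(n+j))" by simp
    have s3: "(-1::real)^(Suc n + Suc j) = (-1)^(n+j)" by simp
    have s4: "(-1::real)^(n + Suc (Suc j)) = (-1)^(n+j)" by simp
    show ?thesis unfolding Suc U_def V_def G_def W1_def W2'_def W2_def
      by (simp only: s1 s2 s3 s4 AB) (simp add: algebra_simps)
  qed
  show ?thesis
    unfolding L U V R1 R2 W2 sum_distrib_left sum.distrib[symmetric] distrib_left[symmetric]
    using T by (simp add: algebra_simps)
qed


theorem theorem2:
  fixes \<alpha> \<beta> \<gamma> x lam n :: nat
  assumes "(\<alpha>, \<beta>, \<gamma>, x) \<noteq> (0, 0, 0, 0)"
  shows "Apoly lam (real x) (Suc n) (real \<alpha>) (real \<beta>) (real \<gamma>)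
       = real \<gamma> * Apoly lam (real x) n (real \<alpha>) (real \<beta>) (real \<gamma> + real \<alpha>)
         + real x * real lam * real \<beta> *
             Apoly (lam + 1) (real x) n (real \<alpha>) (real \<beta>) (real \<gamma> + real \<beta> + real \<alpha>)"
proof -
  define a where "a = real \<alpha>"
  define be where "be = real \<beta>"
  define ga where "ga = real \<gamma>"
  obtain c where c: "expands n a (- be) (- (ga + a)) c" using expands_exists by blast
  have c0: "c (Suc n) = 0" using c by (simp add: expands_def)
  have S': "gstirling n k a (- be) (- (ga + a)) = c k" for k by (rule gstirling_eq[OF c])
  define c1 where "c1 i = (if i = 0 then 0 else c (i - 1)) + (- ga + real i * (- be) - 0) * c i" for i
  have e1: "expands (Suc n) a (- be) (- ga) c1"
    unfolding expands_def
  proof (intro conjI allI impI)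
    fix i assume "Suc n < i" then show "c1 i = 0" using c by (simp add: expands_def c1_def)
  next
    fix t
    have "gfact (t - a) a n = (\<Sum>i\<le>n. c i * gfact (t - a - - (ga + a)) (- be) i)"
      using c by (simp add: expands_def)
    also have "t - a - - (ga + a) = t - - ga" by simp
    finally have f: "gfact (t - a) a n = (\<Sum>i\<le>n. c i * gfact (t - - ga) (- be) i)" .
    have "gfact t a (Suc n) = (t - 0) * gfact (t - a) a n" by (simp add: gfact_Suc_shift)
    also have "\<dots> = (\<Sum>i\<le>Suc n. c1 i * gfact (t - - ga) (- be) i)"
      unfolding c1_def by (rule mult_lin[where c=c and n=n and f="\<lambda>t. gfact (t - a) a n" and t=t and g="- ga" and b="- be" and u=0, OF c0]) (use f in simp)
    finally show "gfact t a (Suc n) = (\<Sum>i\<le>Suc n. c1 i * gfact (t - - ga) (- be) i)" .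
  qed
  define c2 where "c2 i = c i + real (Suc i) * (- be) * c (Suc i)" for i
  have e2: "expands n a (- be) (- (ga + be + a)) c2"
    unfolding expands_def
  proof (intro conjI allI impI)
    fix i assume "n < i" then show "c2 i = 0" using c by (simp add: expands_def c2_def)
  next
    fix t
    have "gfact t a n = (\<Sum>i\<le>n. c i * gfact (t - - (ga + a)) (- be) i)"
      using c by (simp add: expands_def)
    then have "gfact t a n = (\<Sum>i\<le>n. c2 i * gfact (t - - (ga + a) - - be) (- be) i)"
      unfolding c2_def by (rule basis_change[where c=c and n=n, OF c0])
    also have "t - - (ga + a) - - be = t - - (ga + be + a)" by simp
    finally show "gfact t a n = (\<Sum>i\<le>n. c2 i * gfact (t - - (ga + be + a)) (- be) i)" .
  qed
  have S: "gstirling (Suc n) k a (- be) (- ga) = c1 k" for k by (rule gstirling_eq[OF e1])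
  have S'': "gstirling n k a (- be) (- (ga + be + a)) = c2 k" for k by (rule gstirling_eq[OF e2])
  show ?thesis
    unfolding Apoly_def a_def[symmetric] be_def[symmetric] ga_def[symmetric] S S' S''
    unfolding c1_def c2_def
    by (rule final[where c=c and n=n, OF c0])
qed

end
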